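(* Let $(J,F,Y)$ be a pullback triple with Hilbert spaces $\mathcal H,\mathcal X,\mathcal E$. Then: (i) the inverse $Y^{-1}:\mathcal R(Y)\subset\mathcal X\to\mathcal H$ is closable and $J=\overline{Y^{-1}}$; (ii) $Y$ is closable if and only if $J$ is injective, and in this case $\overline{Y}=J^{-1}$; (iii) $Y$ is bounded if and only if $J$ is an isomorphism.
   Context: For Hilbert spaces $\mathcal H,\mathcal X,\mathcal E$, a pullback triple $(J,F,Y)$ consists of operators $J:\mathcal X\to\mathcal H$, $F:\mathcal X\to\mathcal E$, $Y:\mathcal H\to\mathcal X$ such that: $J,F$ are bounded with dense range; $Y$ is a completion operator (densely defined injective linear map with dense range, not necessarily closable); $\|u\|_{\mathcal X}^2=\|Ju\|^2_{\mathcal H}+\|Fu\|_{\mathcal E}^2$ for all $u\in\mathcal X$; and $JYf=f$ for all $f\in\mathcal D(Y)$. *)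

theory Defs
  imports "HOL-Analysis.Analysis"
begin

text \<open>Operators are modelled as a domain set together with a function.
Hilbert spaces are real inner product spaces that are complete.\<close>

definition graph :: "'a set \<Rightarrow> ('a \<Rightarrow> 'b) \<Rightarrow> ('a \<times> 'b) set" where
  "graph D T = {(x, T x) | x. x \<in> D}"

definition linear_op :: "'a::real_vector set \<Rightarrow> ('a \<Rightarrow> 'b::real_vector) \<Rightarrow> bool" where
  "linear_op D T \<longleftrightarrow> subspace D \<and>
     (\<forall>x\<in>D. \<forall>y\<in>D. \<forall>a b::real. T (a *\<^sub>R x + b *\<^sub>R y) = a *\<^sub>R T x + b *\<^sub>R T y)"

definition completion_op :: "'a::real_normed_vector set \<Rightarrow> ('a \<Rightarrow> 'b::real_normed_vector) \<Rightarrow> bool" where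
  "completion_op D T \<longleftrightarrow> linear_op D T \<and> closure D = UNIV \<and> inj_on T D \<and> closure (T ` D) = UNIV"

definition closable :: "'a::topological_space set \<Rightarrow> ('a \<Rightarrow> 'b::topological_space) \<Rightarrow> bool" where
  "closable D T \<longleftrightarrow> (\<forall>x y z. (x, y) \<in> closure (graph D T) \<and> (x, z) \<in> closure (graph D T) \<longrightarrow> y = z)"

definition bounded_op :: "'a::real_normed_vector set \<Rightarrow> ('a \<Rightarrow> 'b::real_normed_vector) \<Rightarrow> bool" where
  "bounded_op D T \<longleftrightarrow> (\<exists>C. \<forall>x\<in>D. norm (T x) \<le> C * norm x)"

definition isomorphism :: "('a::real_normed_vector \<Rightarrow> 'b::real_normed_vector) \<Rightarrow> bool" where
  "isomorphism J \<longleftrightarrow> bounded_linear J \<and> bij J \<and> bounded_linear (inv J)"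

definition pullback_triple ::
  "('x::{real_inner,complete_space} \<Rightarrow> 'h::{real_inner,complete_space}) \<Rightarrow>
   ('x \<Rightarrow> 'e::{real_inner,complete_space}) \<Rightarrow> 'h set \<Rightarrow> ('h \<Rightarrow> 'x) \<Rightarrow> bool" where
  "pullback_triple J F D Y \<longleftrightarrow>
     bounded_linear J \<and> closure (range J) = UNIV \<and>
     bounded_linear F \<and> closure (range F) = UNIV \<and>
     completion_op D Y \<and>
     (\<forall>u. (norm u)\<^sup>2 = (norm (J u))\<^sup>2 + (norm (F u))\<^sup>2) \<and>
     (\<forall>f\<in>D. J (Y f) = f)"

end

theory Submission
  imports Defs
begin

lemma closure_graph1:
  fixes J :: "'a::real_normed_vector \<Rightarrow> 'b::real_normed_vector"
  assumes J: "bounded_linear J" and S: "closure S = UNIV"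
  shows "closure ((\<lambda>x. (x, J x)) ` S) = range (\<lambda>x. (x, J x))"
proof
  have cJ: "continuous_on A J" for A using J linear_continuous_on by blast
  have eq: "range (\<lambda>x. (x, J x)) = {p. snd p = J (fst p)}" by auto
  have "closed {p. snd p = J (fst p)}"
    by (rule closed_Collect_eq[OF continuous_on_snd[OF continuous_on_id] continuous_on_compose2[OF cJ[of UNIV] continuous_on_fst[OF continuous_on_id]]]) simp
  then show "closure ((\<lambda>x. (x, J x)) ` S) \<subseteq> range (\<lambda>x. (x, J x))"
    by (intro closure_minimal) (auto simp: eq)
  have "(\<lambda>x. (x, J x)) ` closure S \<subseteq> closure ((\<lambda>x. (x, J x)) ` S)"
    by (rule image_closure_subset) (auto intro!: continuous_on_Pair continuous_on_id cJ closure_subset)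
  then show "range (\<lambda>x. (x, J x)) \<subseteq> closure ((\<lambda>x. (x, J x)) ` S)" using S by simp
qed

lemma closure_graph2:
  fixes J :: "'a::real_normed_vector \<Rightarrow> 'b::real_normed_vector"
  assumes J: "bounded_linear J" and S: "closure S = UNIV"
  shows "closure ((\<lambda>x. (J x, x)) ` S) = range (\<lambda>x. (J x, x))"
proof
  have cJ: "continuous_on A J" for A using J linear_continuous_on by blast
  have eq: "range (\<lambda>x. (J x, x)) = {p. fst p = J (snd p)}" by auto
  have "closed {p. fst p = J (snd p)}"
    by (rule closed_Collect_eq[OF continuous_on_fst[OF continuous_on_id] continuous_on_compose2[OF cJ[of UNIV] continuous_on_snd[OF continuous_on_id]]]) simp
  then show "closure ((\<lambda>x. (J x, x)) ` S) \<subseteq> range (\<lambda>x. (J x, x))"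
    by (intro closure_minimal) (auto simp: eq)
  have "(\<lambda>x. (J x, x)) ` closure S \<subseteq> closure ((\<lambda>x. (J x, x)) ` S)"
    by (rule image_closure_subset) (auto intro!: continuous_on_Pair continuous_on_id cJ closure_subset)
  then show "range (\<lambda>x. (J x, x)) \<subseteq> closure ((\<lambda>x. (J x, x)) ` S)" using S by simp
qed

lemma graph_image: "graph S T = (\<lambda>x. (x, T x)) ` S"
  unfolding graph_def by auto

theorem mainTheorem3:
  fixes J :: "'x::{real_inner,complete_space} \<Rightarrow> 'h::{real_inner,complete_space}"
    and F :: "'x \<Rightarrow> 'e::{real_inner,complete_space}"
    and D :: "'h set" and Y :: "'h \<Rightarrow> 'x"
  assumes "pullback_triple J F D Y"
  shows "(closable (Y ` D) (inv_into D Y) \<and> closure (graph (Y ` D) (inv_into D Y)) = graph UNIV J)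
       \<and> (closable D Y \<longleftrightarrow> inj J)
       \<and> (inj J \<longrightarrow> closure (graph D Y) = graph (range J) (inv J))
       \<and> (bounded_op D Y \<longleftrightarrow> isomorphism J)"
proof -
  have J: "bounded_linear J" and rJ: "closure (range J) = UNIV"
    and inj: "inj_on Y D" and rY: "closure (Y ` D) = UNIV"
    and JY: "\<And>f. f \<in> D \<Longrightarrow> J (Y f) = f"
    using assms unfolding pullback_triple_def completion_op_def by auto
  have g1: "graph (Y ` D) (inv_into D Y) = (\<lambda>x. (x, J x)) ` (Y ` D)"
    unfolding graph_image image_image
    by (rule image_cong) (auto simp: inv_into_f_f[OF inj] JY)
  have g2: "graph UNIV J = range (\<lambda>x. (x, J x))" unfolding graph_def by auto
  have g3: "graph D Y = (\<lambda>x. (J x, x)) ` (Y ` D)"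
    unfolding graph_image image_image
    by (rule image_cong) (auto simp: JY)
  have c1: "closure (graph (Y ` D) (inv_into D Y)) = graph UNIV J"
    using closure_graph1[OF J rY] g1 g2 by simp
  have c2: "closure (graph D Y) = range (\<lambda>x. (J x, x))"
    using closure_graph2[OF J rY] g3 by simp
  have P1: "closable (Y ` D) (inv_into D Y)"
    unfolding closable_def c1 g2 by auto
  have P2: "closable D Y \<longleftrightarrow> inj J"
    unfolding closable_def c2 inj_def by blast
  have P3: "inj J \<longrightarrow> closure (graph D Y) = graph (range J) (inv J)"
  proof
    assume i: "inj J"
    have "graph (range J) (inv J) = (\<lambda>x. (J x, inv J (J x))) ` UNIV"
      unfolding graph_image image_image ..
    also have "\<dots> = range (\<lambda>x. (J x, x))" using i by simp
    finally show "closure (graph D Y) = graph (range J) (inv J)" using c2 by simp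
  qed
  have P4: "bounded_op D Y \<longleftrightarrow> isomorphism J"
  proof
    assume "bounded_op D Y"
    then obtain C where C: "\<And>x. x \<in> D \<Longrightarrow> norm (Y x) \<le> C * norm x"
      unfolding bounded_op_def by auto
    define M where "M = max C 1"
    have M: "M > 0" "C \<le> M" unfolding M_def by auto
    have cJ: "continuous_on A J" for A using J linear_continuous_on by blast
    have "closed {u. norm u \<le> M * norm (J u)}"
      by (rule closed_Collect_le[OF continuous_on_norm[OF continuous_on_id] continuous_on_mult[OF continuous_on_const continuous_on_norm[OF cJ]]])
    moreover have "Y ` D \<subseteq> {u. norm u \<le> M * norm (J u)}"
    proof
      fix u assume "u \<in> Y ` D"
      then obtain f where f: "f \<in> D" "u = Y f" by auto
      have "norm u \<le> C * norm f" using C f by simp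
      also have "\<dots> \<le> M * norm f" using M by (simp add: mult_right_mono)
      finally show "u \<in> {u. norm u \<le> M * norm (J u)}" using f JY by simp
    qed
    ultimately have "closure (Y ` D) \<subseteq> {u. norm u \<le> M * norm (J u)}"
      by (meson closure_minimal)
    hence bnd: "\<And>u. norm u \<le> M * norm (J u)" using rY by auto
    have bnd': "\<forall>u\<in>UNIV. norm (J u) \<ge> (1/M) * norm u"
      using bnd M by (simp add: pos_divide_le_eq mult.commute)
    have injJ: "inj J"
    proof (rule injI)
      fix u v assume "J u = J v"
      hence "J (u - v) = 0" by (simp add: linear_diff[OF bounded_linear.linear[OF J]])
      hence "norm (u - v) \<le> 0" using bnd[of "u - v"] by simp
      thus "u = v" by simp
    qed
    have "complete (range J)"
      by (rule complete_isometric_image[OF _ subspace_UNIV J bnd']) (use M complete_UNIV in auto)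
    hence "closed (range J)" by (rule complete_imp_closed)
    hence surjJ: "surj J" using rJ by (simp add: closure_closed)
    have bijJ: "bij J" using injJ surjJ by (simp add: bij_def)
    have JI: "J (inv J h) = h" for h using surjJ by (simp add: surj_f_inv_f)
    have IJ: "inv J (J u) = u" for u using injJ by simp
    have lin: "linear J" using J bounded_linear.linear by blast
    have "bounded_linear (inv J)"
    proof (rule bounded_linear_intro[where K = M])
      fix x y show "inv J (x + y) = inv J x + inv J y"
      proof -
        have "J (inv J x + inv J y) = x + y" by (simp add: linear_add[OF lin] JI)
        thus ?thesis using IJ[of "inv J x + inv J y"] by simp
      qed
    next
      fix r x show "inv J (r *\<^sub>R x) = r *\<^sub>R inv J x"
      proof -
        have "J (r *\<^sub>R inv J x) = r *\<^sub>R x" by (simp add: linear_scale[OF lin] JI)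
        thus ?thesis using IJ[of "r *\<^sub>R inv J x"] by simp
      qed
    next
      fix x show "norm (inv J x) \<le> norm x * M" using bnd[of "inv J x"] JI[of x]
        by (simp add: mult.commute)
    qed
    then show "isomorphism J" unfolding isomorphism_def using J bijJ by simp
  next
    assume "isomorphism J"
    hence bl: "bounded_linear (inv J)" and injJ: "inj J"
      unfolding isomorphism_def bij_def by auto
    obtain K where K: "\<And>x. norm (inv J x) \<le> norm x * K"
      using bounded_linear.bounded[OF bl] by blast
    show "bounded_op D Y" unfolding bounded_op_def
    proof (intro exI ballI)
      fix f assume f: "f \<in> D"
      have "Y f = inv J f" using inv_f_f[OF injJ, of "Y f"] JY[OF f] by simp
      thus "norm (Y f) \<le> K * norm f" using K[of f] by (simp add: mult.commute)
    qed
  qed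
  show ?thesis using P1 c1 P2 P3 P4 by blast
qed

end
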